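(* Let $m,n$ be positive integers and let $g,h$ be orientation-preserving $C^2$ diffeomorphisms of $I=[0,1]$ satisfying $gh^mg^{-1}=h^n$. Then $h$ and $ghg^{-1}$ commute. *)

theory Defs
  imports "HOL-Analysis.Analysis"
begin

text \<open>An orientation-preserving C^2 diffeomorphism of I = [0,1]: a strictly increasing
bijection of [0,1] onto itself which is twice continuously differentiable on [0,1]
(one-sided derivatives at the endpoints) with everywhere positive derivative
(so that its inverse is also C^2).\<close>

definition C2_diffeo_plus :: "(real \<Rightarrow> real) \<Rightarrow> bool" where
  "C2_diffeo_plus f \<longleftrightarrow>
     bij_betw f {0..1} {0..1} \<and> strict_mono_on {0..1} f \<and>
     (\<exists>f' f''. (\<forall>x\<in>{0..1}.
         (f has_real_derivative f' x) (at x within {0..1}) \<and>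
         (f' has_real_derivative f'' x) (at x within {0..1}) \<and>
         f' x > 0) \<and> continuous_on {0..1} f'')"

end

theory Submission
  imports Defs
begin


definition C1P :: "(real \<Rightarrow> real) \<Rightarrow> (real \<Rightarrow> real) \<Rightarrow> bool" where
 "C1P F F' \<longleftrightarrow> bij_betw F {0..1} {0..1} \<and> strict_mono_on {0..1} F \<and>
    (\<forall>x\<in>{0..1}. (F has_real_derivative F' x) (at x within {0..1}) \<and> F' x > 0) \<and>
    continuous_on {0..1} F'"

lemma C1P_cont: "C1P F F' \<Longrightarrow> continuous_on {0..1} F"
  unfolding C1P_def by (meson DERIV_continuous_on)

lemma C1P_maps: "C1P F F' \<Longrightarrow> x \<in> {0..1} \<Longrightarrow> F x \<in> {0..1}"
  unfolding C1P_def by (meson bij_betwE)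

lemma C1P_img: "C1P F F' \<Longrightarrow> F ` {0..1} = {0..1}"
  unfolding C1P_def by (simp add: bij_betw_def)

lemma C1P_der: "C1P F F' \<Longrightarrow> x \<in> {0..1} \<Longrightarrow> (F has_real_derivative F' x) (at x within {0..1})"
  unfolding C1P_def by blast

lemma C1P_pos: "C1P F F' \<Longrightarrow> x \<in> {0..1} \<Longrightarrow> F' x > 0"
  unfolding C1P_def by blast

lemma C1P_dcont: "C1P F F' \<Longrightarrow> continuous_on {0..1} F'"
  unfolding C1P_def by blast

lemma C1P_less: "C1P F F' \<Longrightarrow> x \<in> {0..1} \<Longrightarrow> y \<in> {0..1} \<Longrightarrow> x < y \<Longrightarrow> F x < F y"
  unfolding C1P_def strict_mono_on_def by blast

lemma C1P_less_iff: "C1P F F' \<Longrightarrow> x \<in> {0..1} \<Longrightarrow> y \<in> {0..1} \<Longrightarrow> F x < F y \<longleftrightarrow> x < y"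
  by (metis C1P_less not_less_iff_gr_or_eq order_less_asym)

lemma C1P_le_iff: "C1P F F' \<Longrightarrow> x \<in> {0..1} \<Longrightarrow> y \<in> {0..1} \<Longrightarrow> F x \<le> F y \<longleftrightarrow> x \<le> y"
  by (meson C1P_less_iff not_le)

lemma C1P_eq_iff: "C1P F F' \<Longrightarrow> x \<in> {0..1} \<Longrightarrow> y \<in> {0..1} \<Longrightarrow> F x = F y \<longleftrightarrow> x = y"
  by (metis C1P_less not_less_iff_gr_or_eq)

lemma C1P_inv1: "C1P F F' \<Longrightarrow> y \<in> {0..1} \<Longrightarrow> F (inv_into {0..1} F y) = y"
  unfolding C1P_def by (simp add: bij_betw_def f_inv_into_f)

lemma C1P_inv2: "C1P F F' \<Longrightarrow> x \<in> {0..1} \<Longrightarrow> inv_into {0..1} F (F x) = x"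
  unfolding C1P_def by (simp add: bij_betw_def inv_into_f_f)

lemma C1P_inv_maps: "C1P F F' \<Longrightarrow> y \<in> {0..1} \<Longrightarrow> inv_into {0..1} F y \<in> {0..1}"
  unfolding C1P_def bij_betw_def by (metis inv_into_into)

lemma C1P_comp:
  assumes F: "C1P F F'" and G: "C1P G G'"
  shows "C1P (\<lambda>x. G (F x)) (\<lambda>x. G' (F x) * F' x)"
  unfolding C1P_def
proof (intro conjI ballI)
  show "bij_betw (\<lambda>x. G (F x)) {0..1} {0..1}"
    using bij_betw_trans[of F "{0..1}" "{0..1}" G "{0..1}"] F G unfolding C1P_def o_def by blast
  show "strict_mono_on {0..1} (\<lambda>x. G (F x))"
    unfolding strict_mono_on_def using F G by (meson C1P_less C1P_maps)
  fix x :: real assume x: "x \<in> {0..1}"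
  have "((G \<circ> F) has_real_derivative G' (F x) * F' x) (at x within {0..1})"
    apply (rule DERIV_image_chain)
    using C1P_der[OF G C1P_maps[OF F x]] C1P_img[OF F] C1P_der[OF F x] by auto
  then show "((\<lambda>x. G (F x)) has_real_derivative G' (F x) * F' x) (at x within {0..1})"
    by (simp add: o_def)
  show "G' (F x) * F' x > 0" using C1P_pos[OF G C1P_maps[OF F x]] C1P_pos[OF F x] by simp
next
  show "continuous_on {0..1} (\<lambda>x. G' (F x) * F' x)"
    apply (intro continuous_intros continuous_on_compose2[OF C1P_dcont[OF G]] C1P_cont[OF F] C1P_dcont[OF F])
    using C1P_maps[OF F] by auto
qed

lemma C1P_inv:
  assumes F: "C1P F F'"
  shows "C1P (inv_into {0..1} F) (\<lambda>y. 1 / F' (inv_into {0..1} F y))"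
  unfolding C1P_def
proof (intro conjI ballI)
  show "bij_betw (inv_into {0..1} F) {0..1} {0..1}"
    using F unfolding C1P_def by (simp add: bij_betw_inv_into)
  show "strict_mono_on {0..1} (inv_into {0..1} F)"
    unfolding strict_mono_on_def using F
    by (metis C1P_inv1 C1P_inv_maps C1P_less_iff)
  have ci: "continuous_on {0..1} (inv_into {0..1} F)"
    using continuous_on_inv[OF C1P_cont[OF F], of "inv_into {0..1} F"] C1P_img[OF F] C1P_inv2[OF F]
    by auto
  fix y :: real assume y: "y \<in> {0..1}"
  define x where "x = inv_into {0..1} F y"
  have x: "x \<in> {0..1}" "F x = y" using C1P_inv_maps[OF F y] C1P_inv1[OF F y] x_def by auto
  have d: "(F has_derivative (*) (F' x)) (at x within {0..1})"
    using C1P_der[OF F x(1)] by (simp add: has_field_derivative_def)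
  have "(inv_into {0..1} F has_derivative (*) (inverse (F' x))) (at (F x) within F ` {0..1})"
    apply (rule has_derivative_inverse_within[OF d])
    using ci C1P_img[OF F] x C1P_pos[OF F x(1)] C1P_inv2[OF F]
    by (auto simp: continuous_on_eq_continuous_within o_def fun_eq_iff)
  then show "(inv_into {0..1} F has_real_derivative 1 / F' (inv_into {0..1} F y)) (at y within {0..1})"
    using x x_def C1P_img[OF F] by (simp add: has_field_derivative_def inverse_eq_divide)
  show "1 / F' (inv_into {0..1} F y) > 0" using C1P_pos[OF F x(1)] x_def by simp
next
  have ci: "continuous_on {0..1} (inv_into {0..1} F)"
    using continuous_on_inv[OF C1P_cont[OF F], of "inv_into {0..1} F"] C1P_img[OF F] C1P_inv2[OF F]
    by auto
  show "continuous_on {0..1} (\<lambda>y. 1 / F' (inv_into {0..1} F y))"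
    apply (intro continuous_intros continuous_on_compose2[OF C1P_dcont[OF F]] ci)
    using C1P_inv_maps[OF F] C1P_pos[OF F] by (auto simp: image_subset_iff intro!: less_imp_neq[symmetric])
qed



lemma mvt_abs:
  fixes F F' :: "real \<Rightarrow> real"
  assumes d: "\<forall>x\<in>{0..1}. (F has_real_derivative F' x) (at x within {0..1})"
    and y: "y \<in> {0..1}" and z: "z \<in> {0..1}"
  shows "\<exists>\<xi>. min y z \<le> \<xi> \<and> \<xi> \<le> max y z \<and> \<bar>F z - F y\<bar> = \<bar>F' \<xi>\<bar> * \<bar>z - y\<bar>"
proof -
  have main: "\<exists>\<xi>. p \<le> \<xi> \<and> \<xi> \<le> q \<and> F q - F p = F' \<xi> * (q - p)"
    if pq: "p \<le> q" "p \<in> {0..1}" "q \<in> {0..1}" for p q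
  proof -
    have "\<exists>x\<in>{p..q}. F q - F p = (\<lambda>h. F' x * h) (q - p)"
    proof (rule mvt_very_simple[OF pq(1)])
      fix x assume "p \<le> x" "x \<le> q"
      then have "x \<in> {0..1}" using pq by auto
      moreover have "{p..q} \<subseteq> {0..1}" using pq by auto
      ultimately have "(F has_real_derivative F' x) (at x within {p..q})"
        using d by (meson DERIV_subset)
      then show "(F has_derivative (\<lambda>h. F' x * h)) (at x within {p..q})"
        by (simp add: has_field_derivative_def)
    qed
    then show ?thesis by auto
  qed
  show ?thesis
  proof (cases "y \<le> z")
    case True
    then obtain \<xi> where "y \<le> \<xi> \<and> \<xi> \<le> z \<and> F z - F y = F' \<xi> * (z - y)" using main y z by blast
    then show ?thesis using True by (intro exI[of _ \<xi>]) (auto simp: abs_mult)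
  next
    case False
    then obtain \<xi> where "z \<le> \<xi> \<and> \<xi> \<le> y \<and> F y - F z = F' \<xi> * (y - z)" using main y z by force
    then show ?thesis using False by (intro exI[of _ \<xi>]) (auto simp: abs_mult abs_minus_commute)
  qed
qed

definition itd :: "(real \<Rightarrow> real) \<Rightarrow> (real \<Rightarrow> real) \<Rightarrow> nat \<Rightarrow> real \<Rightarrow> real" where
  "itd F F' k x = (\<Prod>i<k. F' ((F ^^ i) x))"

lemma C1P_id: "C1P (\<lambda>x. x) (\<lambda>x. 1)"
  unfolding C1P_def by (auto simp: strict_mono_on_def bij_betw_def intro: derivative_eq_intros)

lemma C1P_funpow:
  assumes F: "C1P F F'"
  shows "C1P (F ^^ k) (itd F F' k)"
proof (induction k)
  case 0
  then show ?case using C1P_id by (simp add: itd_def id_def)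
next
  case (Suc k)
  have "C1P (\<lambda>x. F ((F ^^ k) x)) (\<lambda>x. F' ((F ^^ k) x) * itd F F' k x)"
    by (rule C1P_comp[OF Suc F])
  moreover have "(\<lambda>x. F ((F ^^ k) x)) = F ^^ Suc k" by auto
  moreover have "(\<lambda>x. F' ((F ^^ k) x) * itd F F' k x) = itd F F' (Suc k)"
    by (auto simp: itd_def fun_eq_iff)
  ultimately show ?case by simp
qed

lemma C2_C1P:
  assumes "C2_diffeo_plus F"
  obtains F' F'' where "C1P F F'"
    "\<forall>x\<in>{0..1}. (F' has_real_derivative F'' x) (at x within {0..1})"
    "continuous_on {0..1} F''"
proof -
  obtain F' F'' where H: "\<forall>x\<in>{0..1}. (F has_real_derivative F' x) (at x within {0..1}) \<and>
         (F' has_real_derivative F'' x) (at x within {0..1}) \<and> F' x > 0" "continuous_on {0..1} F''"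
    using assms unfolding C2_diffeo_plus_def by blast
  have "continuous_on {0..1} F'" using H(1) by (meson DERIV_continuous_on)
  then have "C1P F F'" using assms H unfolding C2_diffeo_plus_def C1P_def by blast
  then show ?thesis using that H by blast
qed

lemma log_lip:
  assumes "C2_diffeo_plus F"
  obtains F' L where "C1P F F'" "L \<ge> 0"
    "\<forall>y\<in>{0..1}. \<forall>z\<in>{0..1}. \<bar>ln (F' y) - ln (F' z)\<bar> \<le> L * \<bar>y - z\<bar>"
proof -
  obtain F' F'' where C: "C1P F F'" and D: "\<forall>x\<in>{0..1}. (F' has_real_derivative F'' x) (at x within {0..1})"
    and cc: "continuous_on {0..1} F''"
    using C2_C1P[OF assms] by blast
  have "compact (F'' ` {0..1::real})" by (rule compact_continuous_image[OF cc compact_Icc])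
  then obtain B where B: "B > 0" "\<forall>x\<in>{0..1}. \<bar>F'' x\<bar> \<le> B"
    using compact_imp_bounded bounded_pos by (metis image_eqI real_norm_def)
  obtain x0 where x0: "x0 \<in> {0..1::real}" "\<forall>y\<in>{0..1}. F' x0 \<le> F' y"
    using continuous_attains_inf[OF compact_Icc _ C1P_dcont[OF C]] by fastforce
  define c where "c = F' x0"
  have c: "c > 0" "\<forall>y\<in>{0..1}. c \<le> F' y" using x0 C1P_pos[OF C x0(1)] c_def by auto
  have lipd: "\<bar>F' y - F' z\<bar> \<le> B * \<bar>y - z\<bar>" if yz: "y \<in> {0..1}" "z \<in> {0..1}" for y z
  proof -
    obtain \<xi> where "min z y \<le> \<xi> \<and> \<xi> \<le> max z y \<and> \<bar>F' y - F' z\<bar> = \<bar>F'' \<xi>\<bar> * \<bar>y - z\<bar>"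
      using mvt_abs[OF D yz(2,1)] by blast
    moreover then have "\<xi> \<in> {0..1}" using yz by auto
    ultimately show ?thesis using B(2) by (metis abs_ge_zero mult_right_mono)
  qed
  have lnb: "\<bar>ln a - ln b\<bar> \<le> \<bar>a - b\<bar> / c" if ab: "a \<ge> c" "b \<ge> c" for a b
  proof -
    have k: "ln p - ln q \<le> (p - q) / c" if pq: "p \<ge> q" "q \<ge> c" for p q
    proof -
      have "ln p - ln q = ln (p / q)" using pq c by (simp add: ln_div)
      also have "\<dots> \<le> p / q - 1" using pq c by (intro ln_le_minus_one) auto
      also have "\<dots> = (p - q) / q" using pq c by (simp add: field_simps)
      also have "\<dots> \<le> (p - q) / c" using pq c by (intro divide_left_mono) auto
      finally show ?thesis .
    qed
    show ?thesis
    proof (cases "a \<ge> b")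
      case True
      then have "ln a - ln b \<le> (a - b) / c" using k True ab by blast
      moreover have "ln b \<le> ln a" using True ab c by simp
      ultimately show ?thesis using True by (simp add: abs_if)
    next
      case False
      then have "ln b - ln a \<le> (b - a) / c" using k[where p=b and q=a] False ab by simp
      moreover have "ln a \<le> ln b" using False ab c by simp
      ultimately show ?thesis using False by (simp add: abs_if)
    qed
  qed
  show ?thesis
  proof (rule that[OF C, of "B / c"])
    show "B / c \<ge> 0" using B c by simp
    show "\<forall>y\<in>{0..1}. \<forall>z\<in>{0..1}. \<bar>ln (F' y) - ln (F' z)\<bar> \<le> B / c * \<bar>y - z\<bar>"
    proof (intro ballI)
      fix y z :: real assume yz: "y \<in> {0..1}" "z \<in> {0..1}"
      have "\<bar>ln (F' y) - ln (F' z)\<bar> \<le> \<bar>F' y - F' z\<bar> / c" using lnb c yz by blast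
      also have "\<dots> \<le> B * \<bar>y - z\<bar> / c" using lipd[OF yz] c by (simp add: divide_right_mono)
      finally show "\<bar>ln (F' y) - ln (F' z)\<bar> \<le> B / c * \<bar>y - z\<bar>" by simp
    qed
  qed
qed



lemma funpow_maps: "C1P F F' \<Longrightarrow> x \<in> {0..1} \<Longrightarrow> (F ^^ k) x \<in> {0..1}"
  using C1P_maps[OF C1P_funpow] by blast

lemma funpow_fix: "F a = a \<Longrightarrow> (F ^^ k) a = a"
  by (induction k) auto

lemma funpow_swap: "(F ^^ k) (F x) = F ((F ^^ k) x)"
  by (metis comp_apply funpow_Suc_right funpow_swap1)

lemma iter_less:
  assumes F: "C1P F F'" and y: "y \<in> {0..1}" and "F y < y" and "k > 0"
  shows "(F ^^ k) y < y"
  using \<open>k > 0\<close>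
proof (induction k)
  case 0 then show ?case by simp
next
  case (Suc k)
  show ?case
  proof (cases "k = 0")
    case True then show ?thesis using assms by simp
  next
    case False
    then have "(F ^^ k) y < y" using Suc by simp
    then have "F ((F ^^ k) y) < F y" using C1P_less[OF F funpow_maps[OF F y] y] by simp
    then show ?thesis using assms by simp
  qed
qed

lemma iter_greater:
  assumes F: "C1P F F'" and y: "y \<in> {0..1}" and "F y > y" and "k > 0"
  shows "(F ^^ k) y > y"
  using \<open>k > 0\<close>
proof (induction k)
  case 0 then show ?case by simp
next
  case (Suc k)
  show ?case
  proof (cases "k = 0")
    case True then show ?thesis using assms by simp
  next
    case False
    then have "(F ^^ k) y > y" using Suc by simp
    then have "F ((F ^^ k) y) > F y" using C1P_less[OF F y funpow_maps[OF F y]] by simp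
    then show ?thesis using assms by simp
  qed
qed

lemma iter_fix:
  assumes F: "C1P F F'" and y: "y \<in> {0..1}" and "(F ^^ k) y = y" and "k > 0"
  shows "F y = y"
  using iter_less[OF F y _ assms(4)] iter_greater[OF F y _ assms(4)] assms(3)
  by (metis less_irrefl linorder_neqE_linordered_idom)

lemma iter_sign_less:
  assumes F: "C1P F F'" and y: "y \<in> {0..1}" and "(F ^^ k) y < y" and "k > 0"
  shows "F y < y"
  using iter_greater[OF F y _ assms(4)] assms(3) iter_fix[OF F y _ assms(4)]
  by (metis funpow_fix less_irrefl linorder_neqE_linordered_idom order.asym)

lemma iter_sign_greater:
  assumes F: "C1P F F'" and y: "y \<in> {0..1}" and "(F ^^ k) y > y" and "k > 0"
  shows "F y > y"
  using iter_less[OF F y _ assms(4)] assms(3)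
  by (metis funpow_fix less_irrefl linorder_neqE_linordered_idom order.asym)

lemma iter_in:
  assumes F: "C1P F F'" and ab: "0 \<le> a" "b \<le> 1" "F a = a" "F b = b" and y: "y \<in> {a<..<b}"
  shows "(F ^^ k) y \<in> {a<..<b}"
proof -
  have "(F ^^ k) a < (F ^^ k) y" "(F ^^ k) y < (F ^^ k) b"
    using C1P_less[OF C1P_funpow[OF F]] ab y by auto
  then show ?thesis using funpow_fix[of F a] funpow_fix[of F b] ab by auto
qed

lemma conv_down:
  assumes F: "C1P F F'" and ab: "0 \<le> a" "a < b" "b \<le> 1" "F a = a" "F b = b"
    and nf: "\<forall>z\<in>{a<..<b}. F z \<noteq> z" and y: "y \<in> {a<..<b}" and yl: "F y < y"
  shows "(\<lambda>k. (F ^^ k) y) \<longlonglongrightarrow> a"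
proof -
  define s where "s k = (F ^^ k) y" for k
  have y01: "y \<in> {0..1}" using y ab by auto
  have sin: "s k \<in> {a<..<b}" for k using iter_in[OF F ab(1,3,4,5) y] s_def by simp
  have s01: "s k \<in> {0..1}" for k using sin[of k] ab by auto
  have "s (Suc k) < s k" for k
  proof -
    have "(F ^^ k) (F y) < (F ^^ k) y"
      using C1P_less[OF C1P_funpow[OF F]] yl y01 C1P_maps[OF F y01] by auto
    then show ?thesis by (simp add: s_def funpow_swap)
  qed
  then have "decseq s" by (simp add: decseq_SucI less_imp_le)
  moreover have lb: "\<forall>i. a \<le> s i" using sin by (simp add: less_imp_le)
  ultimately obtain L where L: "s \<longlonglongrightarrow> L" "\<forall>i. L \<le> s i"
    using decseq_convergent by blast
  have La: "a \<le> L" by (rule LIMSEQ_le_const[OF L(1)]) (use lb in auto)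
  have Ly: "L < b" using L(2)[rule_format, of 0] y s_def by simp
  have L01: "L \<in> {0..1}" using La Ly ab by auto
  have "(\<lambda>k. F (s k)) \<longlonglongrightarrow> F L"
    apply (rule continuous_on_tendsto_compose[OF C1P_cont[OF F] L(1) L01])
    using s01 by (auto intro!: always_eventually)
  moreover have "(\<lambda>k. F (s k)) = (\<lambda>k. s (Suc k))" by (auto simp: s_def)
  ultimately have "(\<lambda>k. s (Suc k)) \<longlonglongrightarrow> F L" by simp
  then have "F L = L" using L(1) LIMSEQ_Suc LIMSEQ_unique by blast
  then have "L = a" using nf La Ly by force
  then show ?thesis using L(1) unfolding s_def[abs_def] by simp
qed

lemma conv_up:
  assumes F: "C1P F F'" and ab: "0 \<le> a" "a < b" "b \<le> 1" "F a = a" "F b = b"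
    and nf: "\<forall>z\<in>{a<..<b}. F z \<noteq> z" and y: "y \<in> {a<..<b}" and yl: "F y > y"
  shows "(\<lambda>k. (F ^^ k) y) \<longlonglongrightarrow> b"
proof -
  define s where "s k = (F ^^ k) y" for k
  have y01: "y \<in> {0..1}" using y ab by auto
  have sin: "s k \<in> {a<..<b}" for k using iter_in[OF F ab(1,3,4,5) y] s_def by simp
  have s01: "s k \<in> {0..1}" for k using sin[of k] ab by auto
  have "s (Suc k) > s k" for k
  proof -
    have "(F ^^ k) (F y) > (F ^^ k) y"
      using C1P_less[OF C1P_funpow[OF F]] yl y01 C1P_maps[OF F y01] by auto
    then show ?thesis by (simp add: s_def funpow_swap)
  qed
  then have "incseq s" by (simp add: incseq_SucI less_imp_le)
  moreover have lb: "\<forall>i. s i \<le> b" using sin by (simp add: less_imp_le)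
  ultimately obtain L where L: "s \<longlonglongrightarrow> L" "\<forall>i. s i \<le> L"
    using incseq_convergent by blast
  have La: "L \<le> b" by (rule LIMSEQ_le_const2[OF L(1)]) (use lb in auto)
  have Ly: "a < L" using L(2)[rule_format, of 0] y s_def by simp
  have L01: "L \<in> {0..1}" using La Ly ab by auto
  have "(\<lambda>k. F (s k)) \<longlonglongrightarrow> F L"
    apply (rule continuous_on_tendsto_compose[OF C1P_cont[OF F] L(1) L01])
    using s01 by (auto intro!: always_eventually)
  moreover have "(\<lambda>k. F (s k)) = (\<lambda>k. s (Suc k))" by (auto simp: s_def)
  ultimately have "(\<lambda>k. s (Suc k)) \<longlonglongrightarrow> F L" by simp
  then have "F L = L" using L(1) LIMSEQ_Suc LIMSEQ_unique by blast
  then have "L = b" using nf La Ly by force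
  then show ?thesis using L(1) unfolding s_def[abs_def] by simp
qed

lemma sign_const:
  fixes G :: "real \<Rightarrow> real"
  assumes "continuous_on {a..b} G" and "\<forall>y\<in>{a<..<b}. G y \<noteq> 0"
  shows "(\<forall>y\<in>{a<..<b}. G y < 0) \<or> (\<forall>y\<in>{a<..<b}. G y > 0)"
proof (rule ccontr)
  assume "\<not> ?thesis"
  then obtain y1 y2 where y: "y1 \<in> {a<..<b}" "y2 \<in> {a<..<b}" "G y1 < 0" "G y2 > 0"
    using assms(2) by (meson linorder_neqE_linordered_idom)
  have "\<exists>z. min y1 y2 \<le> z \<and> z \<le> max y1 y2 \<and> G z = 0"
  proof (cases "y1 \<le> y2")
    case True
    have "continuous_on {y1..y2} G" using assms(1) y by (auto elim!: continuous_on_subset)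
    then show ?thesis using IVT'[of G y1 0 y2] y True by auto
  next
    case False
    have "continuous_on {y2..y1} G" using assms(1) y by (auto elim!: continuous_on_subset)
    then show ?thesis using IVT2'[of G y1 0 y2] y False by auto
  qed
  then obtain z where "min y1 y2 \<le> z" "z \<le> max y1 y2" "G z = 0" by blast
  moreover have "z \<in> {a<..<b}" using y calculation by auto
  ultimately show False using assms(2) by auto
qed

lemma tele:
  fixes s :: "nat \<Rightarrow> real"
  shows "(\<Sum>i<N. (s (i + M) - s i)) = (\<Sum>l<M. (s (N + l) - s l))"
proof (induction N)
  case 0 then show ?case by simp
next
  case (Suc N)
  have "(\<Sum>l<M. s (N + l)) + s (N + M) = s N + (\<Sum>l<M. s (Suc N + l))"
    by (induction M) (auto simp: add.commute add.left_commute)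
  then show ?case using Suc by (simp add: sum_subtractf algebra_simps)
qed

lemma tele_bound:
  fixes s :: "nat \<Rightarrow> real"
  assumes "\<forall>i. s i \<in> {0..1}"
  shows "\<bar>\<Sum>i<N. (s (i + M) - s i)\<bar> \<le> real M"
proof -
  have "\<bar>\<Sum>l<M. (s (N + l) - s l)\<bar> \<le> (\<Sum>l<M. \<bar>s (N + l) - s l\<bar>)" by (rule sum_abs)
  also have "\<dots> \<le> (\<Sum>l<M. 1)"
    apply (rule sum_mono) using assms by (auto simp: abs_le_iff) (smt (verit) atLeastAtMost_iff)+
  finally have "\<bar>\<Sum>l<M. (s (N + l) - s l)\<bar> \<le> real M" by simp
  moreover have "(\<Sum>i<N. (s (i + M) - s i)) = (\<Sum>l<M. (s (N + l) - s l))" by (rule tele)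
  ultimately show ?thesis by (simp only:)
qed



lemma funpow_mono_le:
  assumes h: "C1P h h'" and "x \<in> {0..1}" "y \<in> {0..1}" "x \<le> y"
  shows "(h ^^ i) x \<le> (h ^^ i) y"
  using C1P_le_iff[OF C1P_funpow[OF h]] assms by blast

lemma distortion:
  assumes h: "C1P h h'" and L: "L \<ge> 0" "\<forall>y\<in>{0..1}. \<forall>z\<in>{0..1}. \<bar>ln (h' y) - ln (h' z)\<bar> \<le> L * \<bar>y - z\<bar>"
    and cd: "0 \<le> c" "c \<le> d" "d \<le> 1"
    and S: "\<forall>N. (\<Sum>i<N. \<bar>(h ^^ i) d - (h ^^ i) c\<bar>) \<le> S"
    and \<xi>: "\<xi>1 \<in> {c..d}" "\<xi>2 \<in> {c..d}"
  shows "itd h h' N \<xi>1 \<le> exp (L * S) * itd h h' N \<xi>2"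
proof -
  have x01: "\<xi>1 \<in> {0..1}" "\<xi>2 \<in> {0..1}" using \<xi> cd by auto
  have pos: "h' ((h ^^ i) \<xi>) > 0" if "\<xi> \<in> {0..1}" for i \<xi>
    using C1P_pos[OF h funpow_maps[OF h that]] .
  have pos': "h' ((h ^^ i) \<xi>) \<noteq> 0" if "\<xi> \<in> {0..1}" for i \<xi>
    using pos[OF that, of i] by linarith
  have lnp: "ln (itd h h' N \<xi>) = (\<Sum>i<N. ln (h' ((h ^^ i) \<xi>)))" if "\<xi> \<in> {0..1}" for \<xi>
    unfolding itd_def by (rule ln_prod) (use pos'[OF that] in auto)
  have ipos: "itd h h' N \<xi> > 0" if "\<xi> \<in> {0..1}" for \<xi>
    unfolding itd_def by (rule prod_pos) (use pos[OF that] in auto)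
  have bd: "\<bar>(h ^^ i) \<xi>1 - (h ^^ i) \<xi>2\<bar> \<le> \<bar>(h ^^ i) d - (h ^^ i) c\<bar>" for i
  proof -
    have "(h ^^ i) c \<le> (h ^^ i) \<xi>1" "(h ^^ i) \<xi>1 \<le> (h ^^ i) d"
         "(h ^^ i) c \<le> (h ^^ i) \<xi>2" "(h ^^ i) \<xi>2 \<le> (h ^^ i) d"
      using funpow_mono_le[OF h] \<xi> cd by auto
    then show ?thesis by linarith
  qed
  have "ln (itd h h' N \<xi>1) - ln (itd h h' N \<xi>2) = (\<Sum>i<N. ln (h' ((h ^^ i) \<xi>1)) - ln (h' ((h ^^ i) \<xi>2)))"
    using lnp x01 by (simp add: sum_subtractf)
  also have "\<dots> \<le> (\<Sum>i<N. L * \<bar>(h ^^ i) d - (h ^^ i) c\<bar>)"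
  proof (rule sum_mono)
    fix i assume "i \<in> {..<N}"
    have "ln (h' ((h ^^ i) \<xi>1)) - ln (h' ((h ^^ i) \<xi>2)) \<le> L * \<bar>(h ^^ i) \<xi>1 - (h ^^ i) \<xi>2\<bar>"
      using L(2)[rule_format, OF funpow_maps[OF h x01(1)] funpow_maps[OF h x01(2)], of i i] by linarith
    also have "\<dots> \<le> L * \<bar>(h ^^ i) d - (h ^^ i) c\<bar>" using bd L(1) by (simp add: mult_left_mono)
    finally show "ln (h' ((h ^^ i) \<xi>1)) - ln (h' ((h ^^ i) \<xi>2)) \<le> L * \<bar>(h ^^ i) d - (h ^^ i) c\<bar>" .
  qed
  also have "\<dots> = L * (\<Sum>i<N. \<bar>(h ^^ i) d - (h ^^ i) c\<bar>)" by (simp add: sum_distrib_left)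
  also have "\<dots> \<le> L * S" using S L(1) by (simp add: mult_left_mono)
  finally have "ln (itd h h' N \<xi>1) \<le> ln (itd h h' N \<xi>2) + L * S" by simp
  then have "exp (ln (itd h h' N \<xi>1)) \<le> exp (ln (itd h h' N \<xi>2) + L * S)" by simp
  then show ?thesis using ipos x01 by (simp add: exp_add mult.commute)
qed

lemma sum_down:
  assumes h: "C1P h h'" and ab: "0 \<le> a" "a < b" "b \<le> 1" "h a = a" "h b = b"
    and dn: "\<forall>z\<in>{a<..<b}. h z < z" and cd: "c \<in> {a<..<b}" "d \<in> {a<..<b}" "c \<le> d"
  shows "\<exists>S. \<forall>N. (\<Sum>i<N. \<bar>(h ^^ i) d - (h ^^ i) c\<bar>) \<le> S"
proof -
  have nf: "\<forall>z\<in>{a<..<b}. h z \<noteq> z" using dn by force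
  have "(\<lambda>k. (h ^^ k) d) \<longlonglongrightarrow> a" using conv_down[OF h ab nf cd(2)] dn cd by blast
  then have "\<forall>\<^sub>F k in sequentially. (h ^^ k) d < c" using cd by (auto intro: order_tendstoD)
  then obtain M where M: "(h ^^ M) d < c" by (meson eventually_sequentially order_refl)
  have c01: "c \<in> {0..1}" "d \<in> {0..1}" using cd ab by auto
  define s where "s i = (h ^^ i) d" for i
  have s01: "\<forall>i. s i \<in> {0..1}" using funpow_maps[OF h c01(2)] s_def by auto
  have "\<bar>(h ^^ i) d - (h ^^ i) c\<bar> \<le> - (s (i + M) - s i)" for i
  proof -
    have "(h ^^ i) c \<le> (h ^^ i) d" using funpow_mono_le[OF h c01] cd by auto
    moreover have "(h ^^ i) ((h ^^ M) d) \<le> (h ^^ i) c"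
      using funpow_mono_le[OF h funpow_maps[OF h c01(2)] c01(1)] M by auto
    moreover have "s (i + M) = (h ^^ i) ((h ^^ M) d)" by (simp add: s_def funpow_add)
    ultimately show ?thesis by (simp add: s_def)
  qed
  then have "(\<Sum>i<N. \<bar>(h ^^ i) d - (h ^^ i) c\<bar>) \<le> (\<Sum>i<N. - (s (i + M) - s i))" for N
    by (simp add: sum_mono)
  also have "(\<Sum>i<N. - (s (i + M) - s i)) \<le> real M" for N
  proof -
    have "(\<Sum>i<N. - (s (i + M) - s i)) = - (\<Sum>i<N. (s (i + M) - s i))" by (rule sum_negf)
    then show ?thesis using tele_bound[OF s01, where N=N and M=M] by linarith
  qed
  finally show ?thesis by blast
qed

lemma sum_up:
  assumes h: "C1P h h'" and ab: "0 \<le> a" "a < b" "b \<le> 1" "h a = a" "h b = b"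
    and up: "\<forall>z\<in>{a<..<b}. h z > z" and cd: "c \<in> {a<..<b}" "d \<in> {a<..<b}" "c \<le> d"
  shows "\<exists>S. \<forall>N. (\<Sum>i<N. \<bar>(h ^^ i) d - (h ^^ i) c\<bar>) \<le> S"
proof -
  have nf: "\<forall>z\<in>{a<..<b}. h z \<noteq> z" using up by force
  have "(\<lambda>k. (h ^^ k) c) \<longlonglongrightarrow> b" using conv_up[OF h ab nf cd(1)] up cd by blast
  then have "\<forall>\<^sub>F k in sequentially. (h ^^ k) c > d" using cd by (auto intro: order_tendstoD)
  then obtain M where M: "(h ^^ M) c > d" by (meson eventually_sequentially order_refl)
  have c01: "c \<in> {0..1}" "d \<in> {0..1}" using cd ab by auto
  define s where "s i = (h ^^ i) c" for i
  have s01: "\<forall>i. s i \<in> {0..1}" using funpow_maps[OF h c01(1)] s_def by auto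
  have "\<bar>(h ^^ i) d - (h ^^ i) c\<bar> \<le> (s (i + M) - s i)" for i
  proof -
    have "(h ^^ i) c \<le> (h ^^ i) d" using funpow_mono_le[OF h c01] cd by auto
    moreover have "(h ^^ i) d \<le> (h ^^ i) ((h ^^ M) c)"
      using funpow_mono_le[OF h c01(2) funpow_maps[OF h c01(1)]] M by auto
    moreover have "s (i + M) = (h ^^ i) ((h ^^ M) c)" by (simp add: s_def funpow_add)
    ultimately show ?thesis by (simp add: s_def)
  qed
  then have "(\<Sum>i<N. \<bar>(h ^^ i) d - (h ^^ i) c\<bar>) \<le> (\<Sum>i<N. (s (i + M) - s i))" for N
    by (simp add: sum_mono)
  also have "(\<Sum>i<N. (s (i + M) - s i)) \<le> real M" for N
    using tele_bound[OF s01, where N=N and M=M] by linarith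
  finally show ?thesis by blast
qed

lemma no_uniform_steps:
  fixes s :: "nat \<Rightarrow> real"
  assumes "\<eta> > 0" "\<forall>j. s (Suc j) - s j \<ge> \<eta>" "\<forall>j. s j \<in> {0..1}"
  shows False
proof -
  have "s j \<ge> s 0 + real j * \<eta>" for j
    by (induction j) (use assms(2) in \<open>auto simp: algebra_simps\<close>, smt (verit) assms(2))
  moreover obtain j :: nat where "real j * \<eta> > 1"
    using reals_Archimedean3[OF assms(1)] by auto
  moreover have "s 0 \<ge> 0" "s j \<le> 1" using assms(3) by auto
  ultimately show False by (smt (verit))
qed

lemma v_lower:
  assumes v: "C1P v v'" and e: "e \<in> {0..1}" "v' e = 1" and eps: "\<epsilon> > 0"
  shows "\<exists>\<delta>>0. \<forall>y\<in>{0..1}. \<forall>z\<in>{0..1}. \<bar>y - e\<bar> < \<delta> \<longrightarrow> \<bar>z - e\<bar> < \<delta> \<longrightarrow>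
            \<bar>v y - v z\<bar> \<ge> (1 - \<epsilon>) * \<bar>y - z\<bar>"
proof -
  obtain \<delta> where d: "\<delta> > 0" "\<forall>x'\<in>{0..1}. dist x' e < \<delta> \<longrightarrow> dist (v' x') (v' e) < \<epsilon>"
    using C1P_dcont[OF v] e(1) eps unfolding continuous_on_iff by blast
  show ?thesis
  proof (intro exI[of _ \<delta>] conjI ballI impI)
    show "\<delta> > 0" by fact
    fix y z assume yz: "y \<in> {0..1}" "z \<in> {0..1}" "\<bar>y - e\<bar> < \<delta>" "\<bar>z - e\<bar> < \<delta>"
    obtain \<xi> where \<xi>: "min z y \<le> \<xi>" "\<xi> \<le> max z y" "\<bar>v y - v z\<bar> = \<bar>v' \<xi>\<bar> * \<bar>y - z\<bar>"
      using mvt_abs[of v v' z y] C1P_der[OF v] yz by blast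
    have "\<xi> \<in> {0..1}" "\<bar>\<xi> - e\<bar> < \<delta>" using \<xi> yz by auto
    then have "\<bar>v' \<xi> - 1\<bar> < \<epsilon>" using d e by (auto simp: dist_real_def)
    then have "\<bar>v' \<xi>\<bar> \<ge> 1 - \<epsilon>" by linarith
    then show "\<bar>v y - v z\<bar> \<ge> (1 - \<epsilon>) * \<bar>y - z\<bar>" using \<xi>(3) by (simp add: mult_right_mono)
  qed
qed



lemma comm_iter:
  assumes F: "C1P F F'" and v: "C1P v v'" and comm: "\<forall>y\<in>{0..1}. v (F y) = F (v y)"
    and y: "y \<in> {0..1}"
  shows "(v ^^ j) ((F ^^ k) y) = (F ^^ k) ((v ^^ j) y)"
proof -
  have c1: "v ((F ^^ k) z) = (F ^^ k) (v z)" if "z \<in> {0..1}" for z k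
    using that
  proof (induction k)
    case 0 then show ?case by simp
  next
    case (Suc k)
    then show ?case using comm funpow_maps[OF F Suc.prems, of k] by simp
  qed
  show ?thesis using y
  proof (induction j)
    case 0 then show ?case by simp
  next
    case (Suc j)
    then show ?case using c1[OF funpow_maps[OF v Suc.prems, of j]] by simp
  qed
qed

lemma inv_interval:
  assumes v: "C1P v v'" and lh: "0 \<le> lo" "lo \<le> hi" "hi \<le> 1" "v lo = lo" "v hi = hi"
    and y: "y \<in> {lo..hi}"
  shows "(v ^^ j) y \<in> {lo..hi}"
  using y
proof (induction j)
  case 0 then show ?case by simp
next
  case (Suc j)
  have a: "(v ^^ j) y \<in> {0..1}" using Suc lh by auto
  have m: "lo \<in> {0..1}" "hi \<in> {0..1}" using lh by auto
  have "lo \<le> (v ^^ j) y" "(v ^^ j) y \<le> hi" using Suc by auto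
  then have "v lo \<le> v ((v ^^ j) y)" "v ((v ^^ j) y) \<le> v hi"
    using C1P_le_iff[OF v m(1) a] C1P_le_iff[OF v a m(2)] by auto
  then show ?case using lh by simp
qed

lemma kopell_final:
  assumes h: "C1P h h'" and v: "C1P v v'"
    and e: "e \<in> {0..1}" "v' e = 1"
    and comm: "\<forall>y\<in>{0..1}. v ((h ^^ n) y) = (h ^^ n) (v y)"
    and cd: "0 \<le> c" "c \<le> d" "d \<le> 1" "v c = c" "v d = d"
    and x1: "x1 \<in> {c..d}" "v x1 \<noteq> x1"
    and convc: "(\<lambda>k. ((h ^^ n) ^^ k) c) \<longlonglongrightarrow> e" and convd: "(\<lambda>k. ((h ^^ n) ^^ k) d) \<longlonglongrightarrow> e"
    and K: "K > 0" "\<forall>N \<xi>1 \<xi>2. \<xi>1 \<in> {c..d} \<longrightarrow> \<xi>2 \<in> {c..d} \<longrightarrow> itd h h' N \<xi>1 \<le> K * itd h h' N \<xi>2"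
  shows False
proof -
  define P where "P k = (h ^^ n) ^^ k" for k
  have PC: "C1P (P k) (itd h h' (n * k))" for k
    using C1P_funpow[OF h, of "n * k"] by (simp add: P_def funpow_mult)
  have hnC: "C1P (h ^^ n) (itd h h' n)" by (rule C1P_funpow[OF h])
  have commj: "(v ^^ j) (P k y) = P k ((v ^^ j) y)" if "y \<in> {0..1}" for j k y
    unfolding P_def by (rule comm_iter[OF hnC v comm that])
  define s where "s j = (v ^^ j) x1" for j
  have scd: "s j \<in> {c..d}" for j using inv_interval[OF v cd x1(1)] s_def by simp
  have s01: "s j \<in> {0..1}" for j using scd[of j] cd by auto
  have sSuc: "s (Suc j) = v (s j)" for j by (simp add: s_def)
  define \<delta>0 where "\<delta>0 = \<bar>s 1 - s 0\<bar>"
  have d0: "\<delta>0 > 0" using x1 by (simp add: \<delta>0_def s_def)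
  have claim: "\<delta>0 \<le> 2 * K * \<bar>s (Suc j) - s j\<bar>" for j
  proof -
    define \<epsilon> :: real where "\<epsilon> = 1 / (2 * (real j + 1))"
    have eps: "\<epsilon> > 0" "\<epsilon> \<le> 1" by (auto simp: \<epsilon>_def field_simps)
    have "1 + real j * (- \<epsilon>) \<le> (1 + - \<epsilon>) ^ j" by (rule Bernoulli_inequality) (use eps in auto)
    moreover have "real j * \<epsilon> \<le> 1 / 2" by (auto simp: \<epsilon>_def field_simps)
    ultimately have half: "(1 - \<epsilon>) ^ j \<ge> 1 / 2" by simp
    obtain \<delta> where dl: "\<delta> > 0" "\<forall>y\<in>{0..1}. \<forall>z\<in>{0..1}. \<bar>y - e\<bar> < \<delta> \<longrightarrow> \<bar>z - e\<bar> < \<delta> \<longrightarrow>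
            \<bar>v y - v z\<bar> \<ge> (1 - \<epsilon>) * \<bar>y - z\<bar>"
      using v_lower[OF v e eps(1)] by blast
    have "\<forall>\<^sub>F k in sequentially. dist (((h ^^ n) ^^ k) c) e < \<delta> \<and> dist (((h ^^ n) ^^ k) d) e < \<delta>"
      using tendstoD[OF convc dl(1)] tendstoD[OF convd dl(1)] by (rule eventually_conj)
    then obtain k where k: "\<bar>P k c - e\<bar> < \<delta>" "\<bar>P k d - e\<bar> < \<delta>"
      unfolding P_def dist_real_def eventually_sequentially by blast
    define lo where "lo = P k c"
    define hi where "hi = P k d"
    have c01: "c \<in> {0..1}" "d \<in> {0..1}" using cd by auto
    have lh: "0 \<le> lo" "lo \<le> hi" "hi \<le> 1" "v lo = lo" "v hi = hi"
      using C1P_maps[OF PC c01(1), of k] C1P_maps[OF PC c01(2), of k] C1P_le_iff[OF PC c01] cd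
        commj[OF c01(1), of 1 k] commj[OF c01(2), of 1 k]
      by (auto simp: lo_def hi_def)
    have inW: "P k z \<in> {lo..hi}" if "z \<in> {c..d}" for z
      using C1P_le_iff[OF PC] that c01 cd by (auto simp: lo_def hi_def)
    have near: "\<bar>w - e\<bar> < \<delta>" if "w \<in> {lo..hi}" for w
      using k that by (auto simp: lo_def hi_def)
    have Wl: "\<bar>(v ^^ i) y - (v ^^ i) z\<bar> \<ge> (1 - \<epsilon>) ^ i * \<bar>y - z\<bar>"
      if "y \<in> {lo..hi}" "z \<in> {lo..hi}" for i y z
    proof (induction i)
      case 0 then show ?case by simp
    next
      case (Suc i)
      have yi: "(v ^^ i) y \<in> {lo..hi}" "(v ^^ i) z \<in> {lo..hi}"
        using inv_interval[OF v lh] that by auto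
      then have "\<bar>v ((v ^^ i) y) - v ((v ^^ i) z)\<bar> \<ge> (1 - \<epsilon>) * \<bar>(v ^^ i) y - (v ^^ i) z\<bar>"
        using dl(2) near lh by auto
      moreover have "(1 - \<epsilon>) * \<bar>(v ^^ i) y - (v ^^ i) z\<bar> \<ge> (1 - \<epsilon>) * ((1 - \<epsilon>) ^ i * \<bar>y - z\<bar>)"
        using Suc eps by (intro mult_left_mono) auto
      ultimately show ?case by simp
    qed
    have y01: "P k (s 0) \<in> {lo..hi}" "P k (s 1) \<in> {lo..hi}" using inW scd by auto
    have A: "\<bar>P k (s (Suc j)) - P k (s j)\<bar> \<ge> (1 / 2) * \<bar>P k (s 1) - P k (s 0)\<bar>"
    proof -
      have "(v ^^ j) (P k (s 1)) = P k (s (Suc j))"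
        using commj[OF s01[of 1]] by (simp add: s_def funpow_swap)
      moreover have "(v ^^ j) (P k (s 0)) = P k (s j)"
        using commj[OF s01[of 0]] by (simp add: s_def)
      ultimately have "\<bar>P k (s (Suc j)) - P k (s j)\<bar> \<ge> (1 - \<epsilon>) ^ j * \<bar>P k (s 1) - P k (s 0)\<bar>"
        using Wl[OF y01(2) y01(1), of j] by simp
      moreover have "(1 - \<epsilon>) ^ j * \<bar>P k (s 1) - P k (s 0)\<bar> \<ge> (1 / 2) * \<bar>P k (s 1) - P k (s 0)\<bar>"
        using half by (intro mult_right_mono) auto
      ultimately show ?thesis by linarith
    qed
    obtain \<xi>1 where x1: "min (s j) (s (Suc j)) \<le> \<xi>1" "\<xi>1 \<le> max (s j) (s (Suc j))"
      "\<bar>P k (s (Suc j)) - P k (s j)\<bar> = \<bar>itd h h' (n * k) \<xi>1\<bar> * \<bar>s (Suc j) - s j\<bar>"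
      using mvt_abs[of "P k" "itd h h' (n * k)" "s j" "s (Suc j)"] C1P_der[OF PC] s01 by blast
    obtain \<xi>2 where x2: "min (s 0) (s 1) \<le> \<xi>2" "\<xi>2 \<le> max (s 0) (s 1)"
      "\<bar>P k (s 1) - P k (s 0)\<bar> = \<bar>itd h h' (n * k) \<xi>2\<bar> * \<bar>s 1 - s 0\<bar>"
      using mvt_abs[of "P k" "itd h h' (n * k)" "s 0" "s 1"] C1P_der[OF PC] s01 by blast
    have "c \<le> min (s j) (s (Suc j))" "max (s j) (s (Suc j)) \<le> d"
         "c \<le> min (s 0) (s 1)" "max (s 0) (s 1) \<le> d"
      using scd[of j] scd[of "Suc j"] scd[of 0] scd[of 1] by auto
    then have xi: "\<xi>1 \<in> {c..d}" "\<xi>2 \<in> {c..d}" using x1(1,2) x2(1,2) by auto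
    define D1 where "D1 = itd h h' (n * k) \<xi>1"
    define D2 where "D2 = itd h h' (n * k) \<xi>2"
    have Dp: "D1 > 0" "D2 > 0" using C1P_pos[OF PC] xi c01 by (auto simp: D1_def D2_def)
    have DK: "D1 \<le> K * D2" using K(2) xi by (auto simp: D1_def D2_def)
    have "D2 * (\<delta>0 / 2) \<le> D1 * \<bar>s (Suc j) - s j\<bar>"
      using A x1(3) x2(3) Dp by (simp add: D1_def D2_def \<delta>0_def)
    also have "\<dots> \<le> K * D2 * \<bar>s (Suc j) - s j\<bar>" using DK by (simp add: mult_right_mono)
    finally have "D2 * (\<delta>0 / 2) \<le> D2 * (K * \<bar>s (Suc j) - s j\<bar>)" by (simp add: mult_ac)
    then have "\<delta>0 / 2 \<le> K * \<bar>s (Suc j) - s j\<bar>" using Dp(2) by (simp add: mult_le_cancel_left_pos)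
    then show ?thesis by simp
  qed
  define \<eta> where "\<eta> = \<delta>0 / (2 * K)"
  have eta: "\<eta> > 0" using d0 K by (simp add: \<eta>_def)
  have stp: "\<bar>s (Suc j) - s j\<bar> \<ge> \<eta>" for j
    using claim[of j] K by (simp add: \<eta>_def field_simps)
  show False
  proof (cases "s 1 > s 0")
    case True
    have inc: "s (Suc j) > s j" for j
    proof (induction j)
      case 0 then show ?case using True by simp
    next
      case (Suc j)
      then show ?case using C1P_less[OF v s01 s01] sSuc by metis
    qed
    have st: "s (Suc j) - s j \<ge> \<eta>" for j using stp[of j] inc[of j] by linarith
    show False
      by (rule no_uniform_steps[OF eta, of s]) (use st s01 in auto)
  next
    case False
    then have F: "s 1 < s 0" using d0 \<delta>0_def by auto
    have dec: "s (Suc j) < s j" for j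
    proof (induction j)
      case 0 then show ?case using F by simp
    next
      case (Suc j)
      then show ?case using C1P_less[OF v s01 s01] sSuc by metis
    qed
    have st: "(1 - s (Suc j)) - (1 - s j) \<ge> \<eta>" for j using stp[of j] dec[of j] by linarith
    have s01': "1 - s j \<in> {0..1}" for j using s01[of j] by auto
    show False
      by (rule no_uniform_steps[OF eta, of "\<lambda>j. 1 - s j"]) (use st s01' in auto)
  qed
qed



lemma kopell:
  assumes h: "C1P h h'" and L: "L \<ge> 0" "\<forall>y\<in>{0..1}. \<forall>z\<in>{0..1}. \<bar>ln (h' y) - ln (h' z)\<bar> \<le> L * \<bar>y - z\<bar>"
    and n: "n > 0"
    and ab: "0 \<le> a" "a < b" "b \<le> 1" "(h ^^ n) a = a" "(h ^^ n) b = b"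
    and nf: "\<forall>z\<in>{a<..<b}. (h ^^ n) z \<noteq> z"
    and v: "C1P v v'" "v' a = 1" "v' b = 1"
    and comm: "\<forall>y\<in>{0..1}. v ((h ^^ n) y) = (h ^^ n) (v y)"
    and q: "q \<in> {a<..<b}" "v q = q"
    and x0: "x0 \<in> {a<..<b}"
  shows "v x0 = x0"
proof (rule ccontr)
  assume nx: "v x0 \<noteq> x0"
  have PC: "C1P (h ^^ n) (itd h h' n)" using C1P_funpow[OF h] by simp
  have a01: "a \<in> {0..1}" "b \<in> {0..1}" using ab by auto
  have x01: "x0 \<in> {0..1}" "q \<in> {0..1}" using x0 q ab by auto
  have ha: "h a = a" using iter_fix[OF h a01(1) ab(4) n] .
  have hb: "h b = b" using iter_fix[OF h a01(2) ab(5) n] .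
  have hnf: "\<forall>z\<in>{a<..<b}. h z \<noteq> z" using nf funpow_fix by metis
  have cont: "continuous_on {a..b} (\<lambda>z. h z - z)"
    using C1P_cont[OF h] ab by (intro continuous_intros) (auto elim!: continuous_on_subset)
  have sg: "(\<forall>z\<in>{a<..<b}. h z - z < 0) \<or> (\<forall>z\<in>{a<..<b}. h z - z > 0)"
    by (rule sign_const[OF cont]) (use hnf in auto)
  have commP: "v (((h ^^ n) ^^ k) y) = ((h ^^ n) ^^ k) (v y)" if "y \<in> {0..1}" for k y
    using comm_iter[OF PC v(1) comm that, of 1 k] by simp
  have PkC: "C1P ((h ^^ n) ^^ k) (itd (h ^^ n) (itd h h' n) k)" for k by (rule C1P_funpow[OF PC])
  have vx01: "v x0 \<in> {0..1}" using C1P_maps[OF v(1) x01(1)] .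
  have vne: "v (((h ^^ n) ^^ k) x0) \<noteq> ((h ^^ n) ^^ k) x0" for k
    using commP[OF x01(1)] C1P_eq_iff[OF PkC vx01 x01(1)] nx by simp
  have x1in: "((h ^^ n) ^^ k) y \<in> {a<..<b}" if "y \<in> {a<..<b}" for k y
    using iter_in[OF PC ab(1,3,4,5) that] .
  have mem01: "y \<in> {a<..<b} \<Longrightarrow> y \<in> {0..1}" for y using ab by auto
  from sg show False
  proof
    assume "\<forall>z\<in>{a<..<b}. h z - z < 0"
    then have hd: "\<forall>z\<in>{a<..<b}. h z < z" by auto
    have pd: "(h ^^ n) z < z" if "z \<in> {a<..<b}" for z
      using iter_less[OF h mem01[OF that] _ n] hd that by auto
    have cv: "(\<lambda>k. ((h ^^ n) ^^ k) y) \<longlonglongrightarrow> a" if "y \<in> {a<..<b}" for y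
      using conv_down[OF PC ab nf that pd[OF that]] .
    have "\<forall>\<^sub>F k in sequentially. ((h ^^ n) ^^ k) x0 < q"
      using cv[OF x0] q by (auto intro: order_tendstoD)
    then obtain K1 where K1: "((h ^^ n) ^^ K1) x0 < q" by (meson eventually_sequentially order_refl)
    define x1 where "x1 = ((h ^^ n) ^^ K1) x0"
    have x1: "x1 \<in> {a<..<b}" "v x1 \<noteq> x1" "x1 < q" using x1in[OF x0] vne K1 x1_def by auto
    have "\<forall>\<^sub>F k in sequentially. ((h ^^ n) ^^ k) q < x1"
      using cv[OF q(1)] x1 by (auto intro: order_tendstoD)
    then obtain K2 where K2: "((h ^^ n) ^^ K2) q < x1" by (meson eventually_sequentially order_refl)
    define c where "c = ((h ^^ n) ^^ K2) q"
    have c: "c \<in> {a<..<b}" "v c = c" "c < x1"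
      using x1in[OF q(1)] commP[OF x01(2)] q K2 c_def by auto
    obtain S where S: "\<forall>N. (\<Sum>i<N. \<bar>(h ^^ i) q - (h ^^ i) c\<bar>) \<le> S"
      using sum_down[OF h ab(1-3) ha hb hd c(1) q(1)] c x1 by force
    show False
    proof (rule kopell_final[OF h v(1) a01(1) v(2) comm])
      show "0 \<le> c" "c \<le> q" "q \<le> 1" "v c = c" "v q = q" using c x1 q ab by auto
      show "x1 \<in> {c..q}" "v x1 \<noteq> x1" using c x1 by auto
      show "(\<lambda>k. ((h ^^ n) ^^ k) c) \<longlonglongrightarrow> a" "(\<lambda>k. ((h ^^ n) ^^ k) q) \<longlonglongrightarrow> a"
        using cv c q by auto
      show "exp (L * S) > 0" by simp
      show "\<forall>N \<xi>1 \<xi>2. \<xi>1 \<in> {c..q} \<longrightarrow> \<xi>2 \<in> {c..q} \<longrightarrow> itd h h' N \<xi>1 \<le> exp (L * S) * itd h h' N \<xi>2"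
        using distortion[OF h L _ _ _ S] c x1 q ab by auto
    qed
  next
    assume "\<forall>z\<in>{a<..<b}. h z - z > 0"
    then have hu: "\<forall>z\<in>{a<..<b}. h z > z" by auto
    have pu: "(h ^^ n) z > z" if "z \<in> {a<..<b}" for z
      using iter_greater[OF h mem01[OF that] _ n] hu that by auto
    have cv: "(\<lambda>k. ((h ^^ n) ^^ k) y) \<longlonglongrightarrow> b" if "y \<in> {a<..<b}" for y
      using conv_up[OF PC ab nf that pu[OF that]] .
    have "\<forall>\<^sub>F k in sequentially. ((h ^^ n) ^^ k) x0 > q"
      using cv[OF x0] q by (auto intro: order_tendstoD)
    then obtain K1 where K1: "((h ^^ n) ^^ K1) x0 > q" by (meson eventually_sequentially order_refl)
    define x1 where "x1 = ((h ^^ n) ^^ K1) x0"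
    have x1: "x1 \<in> {a<..<b}" "v x1 \<noteq> x1" "x1 > q" using x1in[OF x0] vne K1 x1_def by auto
    have "\<forall>\<^sub>F k in sequentially. ((h ^^ n) ^^ k) q > x1"
      using cv[OF q(1)] x1 by (auto intro: order_tendstoD)
    then obtain K2 where K2: "((h ^^ n) ^^ K2) q > x1" by (meson eventually_sequentially order_refl)
    define d where "d = ((h ^^ n) ^^ K2) q"
    have d: "d \<in> {a<..<b}" "v d = d" "d > x1"
      using x1in[OF q(1)] commP[OF x01(2)] q K2 d_def by auto
    obtain S where S: "\<forall>N. (\<Sum>i<N. \<bar>(h ^^ i) d - (h ^^ i) q\<bar>) \<le> S"
      using sum_up[OF h ab(1-3) ha hb hu q(1) d(1)] d x1 by force
    show False
    proof (rule kopell_final[OF h v(1) a01(2) v(3) comm])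
      show "0 \<le> q" "q \<le> d" "d \<le> 1" "v q = q" "v d = d" using d x1 q ab by auto
      show "x1 \<in> {q..d}" "v x1 \<noteq> x1" using d x1 by auto
      show "(\<lambda>k. ((h ^^ n) ^^ k) q) \<longlonglongrightarrow> b" "(\<lambda>k. ((h ^^ n) ^^ k) d) \<longlonglongrightarrow> b"
        using cv d q by auto
      show "exp (L * S) > 0" by simp
      show "\<forall>N \<xi>1 \<xi>2. \<xi>1 \<in> {q..d} \<longrightarrow> \<xi>2 \<in> {q..d} \<longrightarrow> itd h h' N \<xi>1 \<le> exp (L * S) * itd h h' N \<xi>2"
        using distortion[OF h L _ _ _ S] d x1 q ab by auto
    qed
  qed
qed



lemma C1P_ends:
  assumes F: "C1P F F'"
  shows "F 0 = 0" "F 1 = 1"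
proof -
  obtain z where z: "z \<in> {0..1}" "F z = 0" using C1P_img[OF F] by (metis atLeastAtMost_iff image_iff order_refl zero_le_one)
  then have "F 0 \<le> F z" using C1P_le_iff[OF F, of 0 z] by auto
  then show "F 0 = 0" using z C1P_maps[OF F, of 0] by auto
  obtain w where w: "w \<in> {0..1}" "F w = 1" using C1P_img[OF F] by (metis atLeastAtMost_iff image_iff order_refl zero_le_one)
  then have "F w \<le> F 1" using C1P_le_iff[OF F, of w 1] by auto
  then show "F 1 = 1" using w C1P_maps[OF F, of 1] by auto
qed

lemma iter_cmp:
  assumes U: "C1P U U'" and H: "C1P H H'" and ab: "0 \<le> a" "b \<le> 1" "U a = a" "U b = b" "H a = a" "H b = b"
    and lt: "\<forall>y\<in>{a<..<b}. U y < H y" and y: "y \<in> {a<..<b}" and k: "k > 0"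
  shows "(U ^^ k) y < (H ^^ k) y"
  using k
proof (induction k)
  case 0 then show ?case by simp
next
  case (Suc k)
  have ui: "(U ^^ k) y \<in> {a<..<b}" "(H ^^ k) y \<in> {a<..<b}"
    using iter_in[OF U ab(1,2,3,4) y] iter_in[OF H ab(1,2,5,6) y] by auto
  have le: "(U ^^ k) y \<le> (H ^^ k) y" using Suc by (cases "k = 0") auto
  have "U ((U ^^ k) y) < H ((U ^^ k) y)" using lt ui by auto
  also have "\<dots> \<le> H ((H ^^ k) y)" using C1P_le_iff[OF H] ui le ab by auto
  finally show ?case by simp
qed

theorem lemma5p7:
  fixes g h :: "real \<Rightarrow> real" and m n :: nat
  assumes "m > 0" and "n > 0"
    and "C2_diffeo_plus g" and "C2_diffeo_plus h"
    and "\<forall>x\<in>{0..1}. g ((h ^^ m) (inv_into {0..1} g x)) = (h ^^ n) x"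
  shows "\<forall>x\<in>{0..1}. h (g (h (inv_into {0..1} g x))) = g (h (inv_into {0..1} g (h x)))"
proof -
  note m = assms(1) and n = assms(2) and rel = assms(5)
  obtain g' where gC: "C1P g g'" using C2_C1P[OF assms(3)] by blast
  obtain h' L where hC: "C1P h h'" and L: "L \<ge> 0"
    "\<forall>y\<in>{0..1}. \<forall>z\<in>{0..1}. \<bar>ln (h' y) - ln (h' z)\<bar> \<le> L * \<bar>y - z\<bar>"
    using log_lip[OF assms(4)] by blast
  define gi where "gi = inv_into {0..1} g"
  define hi where "hi = inv_into {0..1} h"
  have giC: "C1P gi (\<lambda>y. 1 / g' (gi y))" unfolding gi_def by (rule C1P_inv[OF gC])
  have hiC: "C1P hi (\<lambda>y. 1 / h' (hi y))" unfolding hi_def by (rule C1P_inv[OF hC])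
  define f where "f = (\<lambda>x. g (h (gi x)))"
  obtain f' where fC: "C1P f f'"
    using C1P_comp[OF C1P_comp[OF giC hC] gC] unfolding f_def by blast
  define fi where "fi = inv_into {0..1} f"
  have fiC: "C1P fi (\<lambda>y. 1 / f' (fi y))" unfolding fi_def by (rule C1P_inv[OF fC])
  define u where "u = (\<lambda>x. f (h (fi x)))"
  define u' where "u' = (\<lambda>x. f' (h (fi x)) * (h' (fi x) * (1 / f' (fi x))))"
  have uC: "C1P u u'" unfolding u_def u'_def by (rule C1P_comp[OF C1P_comp[OF fiC hC] fC])
  define v where "v = (\<lambda>x. hi (u x))"
  define v' where "v' = (\<lambda>x. 1 / h' (hi (u x)) * u' x)"
  have vC: "C1P v v'" unfolding v_def v'_def by (rule C1P_comp[OF uC hiC])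
  define \<phi> where "\<phi> = h ^^ n"
  have gig: "gi (g x) = x" if "x \<in> {0..1}" for x using C1P_inv2[OF gC that] gi_def by simp
  have ggi: "g (gi x) = x" if "x \<in> {0..1}" for x using C1P_inv1[OF gC that] gi_def by simp
  have hih: "hi (h x) = x" if "x \<in> {0..1}" for x using C1P_inv2[OF hC that] hi_def by simp
  have hhi: "h (hi x) = x" if "x \<in> {0..1}" for x using C1P_inv1[OF hC that] hi_def by simp
  have fif: "fi (f x) = x" if "x \<in> {0..1}" for x using C1P_inv2[OF fC that] fi_def by simp
  have ffi: "f (fi x) = x" if "x \<in> {0..1}" for x using C1P_inv1[OF fC that] fi_def by simp
  have fpow: "(f ^^ k) x = g ((h ^^ k) (gi x))" if "x \<in> {0..1}" for k x
  proof (induction k)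
    case 0 then show ?case using ggi[OF that] by simp
  next
    case (Suc k)
    have "(h ^^ k) (gi x) \<in> {0..1}" using funpow_maps[OF hC C1P_maps[OF giC that]] .
    then show ?case using Suc gig by (simp add: f_def)
  qed
  have fm: "(f ^^ m) x = \<phi> x" if "x \<in> {0..1}" for x
    using fpow[OF that] rel that by (simp add: gi_def \<phi>_def)
  have upow: "(u ^^ k) x = f ((h ^^ k) (fi x))" if "x \<in> {0..1}" for k x
  proof (induction k)
    case 0 then show ?case using ffi[OF that] by simp
  next
    case (Suc k)
    have "(h ^^ k) (fi x) \<in> {0..1}" using funpow_maps[OF hC C1P_maps[OF fiC that]] .
    then show ?case using Suc fif by (simp add: u_def)
  qed
  have un: "(u ^^ n) x = \<phi> x" if "x \<in> {0..1}" for x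
  proof -
    have fx: "fi x \<in> {0..1}" using C1P_maps[OF fiC that] .
    have "(u ^^ n) x = f (\<phi> (fi x))" using upow[OF that] by (simp add: \<phi>_def)
    also have "\<dots> = f ((f ^^ m) (fi x))" using fm[OF fx] by simp
    also have "\<dots> = (f ^^ m) (f (fi x))" by (simp add: funpow_swap)
    also have "\<dots> = \<phi> x" using ffi[OF that] fm[OF that] by simp
    finally show ?thesis .
  qed
  have \<phi>C: "C1P \<phi> (itd h h' n)" unfolding \<phi>_def by (rule C1P_funpow[OF hC])
  have ucomm: "u (\<phi> y) = \<phi> (u y)" if "y \<in> {0..1}" for y
    using un[OF that] un[OF C1P_maps[OF uC that]] by (metis funpow_swap)
  have hcomm: "h (\<phi> y) = \<phi> (h y)" for y by (simp add: \<phi>_def funpow_swap)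
  have hicomm: "hi (\<phi> z) = \<phi> (hi z)" if "z \<in> {0..1}" for z
  proof -
    have hz: "hi z \<in> {0..1}" using C1P_maps[OF hiC that] .
    have "\<phi> z = h (\<phi> (hi z))" using hcomm[of "hi z"] hhi[OF that] by simp
    then show ?thesis using hih[OF C1P_maps[OF \<phi>C hz]] by simp
  qed
  have vcomm: "\<forall>y\<in>{0..1}. v ((h ^^ n) y) = (h ^^ n) (v y)"
    using ucomm hicomm C1P_maps[OF uC] unfolding v_def \<phi>_def by simp
  have fixpts: "h e = e \<and> f e = e \<and> fi e = e \<and> u e = e \<and> hi e = e \<and> v e = e \<and> v' e = 1"
    if e: "e \<in> {0..1}" "\<phi> e = e" for e
  proof -
    have he: "h e = e" using iter_fix[OF hC e(1) _ n] e by (simp add: \<phi>_def)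
    have fe: "f e = e" using iter_fix[OF fC e(1) _ m] fm[OF e(1)] e by simp
    have fie: "fi e = e" using fif[OF e(1)] fe by simp
    have ue: "u e = e" using fie he fe by (simp add: u_def)
    have hie: "hi e = e" using hih[OF e(1)] he by simp
    have ve: "v e = e" using ue hie by (simp add: v_def)
    have p: "h' e > 0" "f' e > 0" using C1P_pos[OF hC e(1)] C1P_pos[OF fC e(1)] by auto
    have "v' e = 1 / h' e * (f' e * (h' e * (1 / f' e)))"
      using ue hie fie he by (simp add: v'_def u'_def)
    also have "\<dots> = 1" using p by (simp add: field_simps)
    finally show ?thesis using he fe fie ue hie ve by simp
  qed
  have \<phi>0: "\<phi> 0 = 0" "\<phi> 1 = 1" using C1P_ends[OF \<phi>C] by auto
  have main: "h (f x) = f (h x)" if x: "x \<in> {0..1}" for x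
  proof (cases "\<phi> x = x")
    case True
    then show ?thesis using fixpts[OF x True] by simp
  next
    case False
    have cont: "continuous_on {0..1} (\<lambda>y. \<phi> y - y)"
      using C1P_cont[OF \<phi>C] by (intro continuous_intros)
    define A where "A = {y \<in> {0..x}. \<phi> y - y = 0}"
    define B where "B = {y \<in> {x..1}. \<phi> y - y = 0}"
    have clA: "closed A" unfolding A_def
      by (rule continuous_closed_preimage_constant) (use cont x in \<open>auto elim!: continuous_on_subset\<close>)
    have clB: "closed B" unfolding B_def
      by (rule continuous_closed_preimage_constant) (use cont x in \<open>auto elim!: continuous_on_subset\<close>)
    have A0: "0 \<in> A" using \<phi>0 x by (auto simp: A_def)
    have B1: "1 \<in> B" using \<phi>0 x by (auto simp: B_def)
    define a where "a = Sup A"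
    define b where "b = Inf B"
    have aA: "a \<in> A" unfolding a_def
      by (rule closed_contains_Sup) (use A0 clA in \<open>auto simp: A_def bdd_above_def\<close>)
    have bB: "b \<in> B" unfolding b_def
      by (rule closed_contains_Inf) (use B1 clB in \<open>auto simp: B_def bdd_below_def\<close>)
    have aup: "y \<le> a" if "y \<in> A" for y
      unfolding a_def by (rule cSup_upper[OF that]) (auto simp: A_def bdd_above_def)
    have blo: "b \<le> y" if "y \<in> B" for y
      unfolding b_def by (rule cInf_lower[OF that]) (auto simp: B_def bdd_below_def)
    have ab: "0 \<le> a" "a < x" "x < b" "b \<le> 1" "\<phi> a = a" "\<phi> b = b"
      using aA bB False by (auto simp: A_def B_def) (smt (verit))+
    have nf: "\<forall>z\<in>{a<..<b}. \<phi> z \<noteq> z"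
    proof
      fix z assume z: "z \<in> {a<..<b}"
      show "\<phi> z \<noteq> z"
      proof
        assume "\<phi> z = z"
        then show False
          using aup[of z] blo[of z] z ab by (cases "z \<le> x") (auto simp: A_def B_def)
      qed
    qed
    have a01: "a \<in> {0..1}" "b \<in> {0..1}" using ab by auto
    have fa: "h a = a \<and> f a = a \<and> fi a = a \<and> u a = a \<and> hi a = a \<and> v a = a \<and> v' a = 1"
      using fixpts[OF a01(1) ab(5)] .
    have fb: "h b = b \<and> f b = b \<and> fi b = b \<and> u b = b \<and> hi b = b \<and> v b = b \<and> v' b = 1"
      using fixpts[OF a01(2) ab(6)] .
    have mem01: "y \<in> {a<..<b} \<Longrightarrow> y \<in> {0..1}" for y using ab by auto
    have ueq: "\<forall>y\<in>{a<..<b}. u y = h y"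
    proof (cases "\<exists>q\<in>{a<..<b}. u q = h q")
      case True
      then obtain q where q: "q \<in> {a<..<b}" "u q = h q" by blast
      have vq: "v q = q" using q hih[OF mem01[OF q(1)]] by (simp add: v_def)
      have "v y = y" if "y \<in> {a<..<b}" for y
        apply (rule kopell[OF hC L n, where a=a and b=b and v=v and v'=v' and q=q])
        using ab nf fa fb vC vcomm q vq that by (auto simp: \<phi>_def)
      then show ?thesis
        using hhi C1P_maps[OF uC] mem01 by (metis v_def)
    next
      case False
      have contu: "continuous_on {a..b} (\<lambda>y. u y - h y)"
        using C1P_cont[OF uC] C1P_cont[OF hC] a01
        by (intro continuous_intros) (auto elim!: continuous_on_subset)
      have "(\<forall>y\<in>{a<..<b}. u y - h y < 0) \<or> (\<forall>y\<in>{a<..<b}. u y - h y > 0)"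
        by (rule sign_const[OF contu]) (use False in auto)
      then show ?thesis
      proof
        assume lt: "\<forall>y\<in>{a<..<b}. u y - h y < 0"
        have "(u ^^ n) x < (h ^^ n) x"
          apply (rule iter_cmp[OF uC hC, where a=a and b=b])
          using lt fa fb ab n by auto
        then show ?thesis using un[OF x] by (simp add: \<phi>_def)
      next
        assume lt: "\<forall>y\<in>{a<..<b}. u y - h y > 0"
        have "(h ^^ n) x < (u ^^ n) x"
          apply (rule iter_cmp[OF hC uC, where a=a and b=b])
          using lt fa fb ab n by auto
        then show ?thesis using un[OF x] by (simp add: \<phi>_def)
      qed
    qed
    have fx: "f x \<in> {a<..<b}"
      using iter_in[OF fC ab(1,4), where k=1 and y=x] fa fb ab by auto
    then have "u (f x) = h (f x)" using ueq by blast
    then show ?thesis using fif[OF x] by (simp add: u_def)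
  qed
  show ?thesis using main by (simp add: f_def gi_def)
qed


end
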